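(* Let $n\ge1$, $\delta\ge0$ and $\hat r\in\mathbb R^n$ with $\hat r_1\ge\hat r_2\ge\cdots\ge\hat r_n$. For $k\in\{1,\dots,n\}$ let $u^{(k)}\in\Delta_n$ have its first $k$ entries equal to $1/k$ and the rest $0$, and $A_k:=\frac1k\sum_{i=1}^k\hat r_i$. Then the problem $\max_{\pi\in\Delta_n}\{\langle\pi,\hat r\rangle-\delta\|\pi\|_\infty\}$ has an optimizer of the form $u^{(m)}$ for some $m\in\arg\max_{1\le k\le n}\{A_k-\delta/k\}$.
   Context: $\Delta_n$ is the probability simplex in $\mathbb R^n$; $\|\pi\|_\infty=\max_i|\pi_i|$. *)

theory Defs
  imports "HOL-Analysis.Analysis"
begin

text \<open>Vectors in R^n are represented as functions nat => real; only the
entries with index i < n (0-based, i.e. coordinates 1..n) matter.\<close>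

definition prob_simplex :: "nat \<Rightarrow> (nat \<Rightarrow> real) set" where
  "prob_simplex n = {\<pi>. (\<forall>i<n. 0 \<le> \<pi> i) \<and> (\<Sum>i<n. \<pi> i) = 1}"

definition inner_n :: "nat \<Rightarrow> (nat \<Rightarrow> real) \<Rightarrow> (nat \<Rightarrow> real) \<Rightarrow> real" where
  "inner_n n x y = (\<Sum>i<n. x i * y i)"

definition sup_norm :: "nat \<Rightarrow> (nat \<Rightarrow> real) \<Rightarrow> real" where
  "sup_norm n x = Max ((\<lambda>i. \<bar>x i\<bar>) ` {..<n})"

definition uvec :: "nat \<Rightarrow> nat \<Rightarrow> real" where
  "uvec k i = (if i < k then 1 / real k else 0)"

definition avg :: "(nat \<Rightarrow> real) \<Rightarrow> nat \<Rightarrow> real" where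
  "avg r k = (1 / real k) * (\<Sum>i<k. r i)"

end

theory Submission
  imports Defs
begin

lemma pos_sum_bound:
  fixes n :: nat and \<delta> V :: real and r :: "nat \<Rightarrow> real"
  assumes mono: "\<And>i j. i \<le> j \<Longrightarrow> j < n \<Longrightarrow> r j \<le> r i"
    and bnd: "\<And>k. k \<le> n \<Longrightarrow> (\<Sum>i<k. r i - V) \<le> \<delta>"
  shows "(\<Sum>i<n. max 0 (r i - V)) \<le> \<delta>"
proof -
  define K where "K = {i. i < n \<and> r i > V}"
  have finK: "finite K" unfolding K_def by auto
  define k where "k = (if K = {} then 0 else Suc (Max K))"
  have Kk: "K = {..<k}"
  proof (cases "K = {}")
    case True then show ?thesis by (simp add: k_def)
  next
    case False
    have "Max K \<in> K" using False finK by simp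
    moreover have "\<And>i. i \<in> K \<Longrightarrow> i \<le> Max K" using finK by simp
    ultimately show ?thesis using False unfolding k_def
      apply (auto simp: less_Suc_eq_le)
      apply (auto simp: K_def)
      using mono by (meson le_less_trans order_less_le_trans)
  qed
  have kn: "k \<le> n"
  proof (cases "K = {}")
    case True then show ?thesis by (simp add: k_def)
  next
    case False
    have "Max K \<in> K" using False finK by simp
    then have "Max K < n" by (simp add: K_def)
    then show ?thesis using False by (simp add: k_def)
  qed
  have "(\<Sum>i<n. max 0 (r i - V)) = (\<Sum>i\<in>K. max 0 (r i - V))"
    by (rule sum.mono_neutral_right) (auto simp: K_def)
  also have "\<dots> = (\<Sum>i\<in>K. r i - V)"
    by (rule sum.cong) (auto simp: K_def)
  also have "\<dots> = (\<Sum>i<k. r i - V)" using Kk by simp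
  also have "\<dots> \<le> \<delta>" using bnd kn by simp
  finally show ?thesis .
qed

theorem mainTheorem11:
  fixes n :: nat and \<delta> :: real and r :: "nat \<Rightarrow> real"
  assumes "n \<ge> 1" and "\<delta> \<ge> 0"
    and "\<And>i j. i \<le> j \<Longrightarrow> j < n \<Longrightarrow> r j \<le> r i"
  shows "\<exists>m\<in>{1..n}.
           (\<forall>k\<in>{1..n}. avg r k - \<delta> / real k \<le> avg r m - \<delta> / real m) \<and>
           uvec m \<in> prob_simplex n \<and>
           (\<forall>\<pi>\<in>prob_simplex n. inner_n n \<pi> r - \<delta> * sup_norm n \<pi>
              \<le> inner_n n (uvec m) r - \<delta> * sup_norm n (uvec m))"
proof -
  define f where "f k = avg r k - \<delta> / real k" for k
  have ne: "f ` {1..n} \<noteq> {}" using assms(1) by auto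
  have "Max (f ` {1..n}) \<in> f ` {1..n}" using ne by (intro Max_in) auto
  then obtain m where m: "m \<in> {1..n}" "f m = Max (f ` {1..n})" by auto
  have mx: "\<forall>k\<in>{1..n}. f k \<le> f m" using m by simp
  define V where "V = f m"
  have m1: "m \<ge> 1" "m \<le> n" using m by auto
  have sumu: "(\<Sum>i<n. uvec m i * x i) = (\<Sum>i<m. x i) / real m" for x
  proof -
    have "(\<Sum>i<n. uvec m i * x i) = (\<Sum>i<m. uvec m i * x i)"
      by (rule sum.mono_neutral_right) (use m1 in \<open>auto simp: uvec_def\<close>)
    also have "\<dots> = (\<Sum>i<m. x i / real m)" by (rule sum.cong) (auto simp: uvec_def)
    finally show ?thesis by (simp add: sum_divide_distrib)
  qed
  have usimp: "uvec m \<in> prob_simplex n"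
    unfolding prob_simplex_def
  proof safe
    show "0 \<le> uvec m i" for i by (simp add: uvec_def)
    have "(\<Sum>i<n. uvec m i) = (\<Sum>i<n. uvec m i * 1)" by simp
    also have "\<dots> = 1" using sumu[of "\<lambda>_. 1"] m1 by simp
    finally show "(\<Sum>i<n. uvec m i) = 1" .
  qed
  have inu: "inner_n n (uvec m) r = avg r m"
    unfolding inner_n_def avg_def using sumu[of r] by simp
  have supu: "sup_norm n (uvec m) = 1 / real m"
  proof -
    have "(\<lambda>i. \<bar>uvec m i\<bar>) ` {..<n} = {1 / real m} \<union> (if m < n then {0} else {})"
      using m1 by (auto simp: uvec_def image_iff intro!: exI[of _ 0])
    then show ?thesis unfolding sup_norm_def using m1 by auto
  qed
  have bnd: "(\<Sum>i<k. r i - V) \<le> \<delta>" if "k \<le> n" for k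
  proof (cases "k = 0")
    case True then show ?thesis using assms(2) by simp
  next
    case False
    then have "f k \<le> V" using mx that V_def by auto
    then have "(\<Sum>i<k. r i) / real k - \<delta> / real k \<le> V"
      by (simp add: f_def avg_def)
    then have "(\<Sum>i<k. r i) - \<delta> \<le> V * real k" using False
      by (simp add: divide_simps diff_divide_distrib[symmetric] mult.commute)
    then show ?thesis by (simp add: sum_subtractf algebra_simps)
  qed
  have pb: "(\<Sum>i<n. max 0 (r i - V)) \<le> \<delta>"
    by (rule pos_sum_bound[OF assms(3) bnd]) auto
  have main: "inner_n n \<pi> r - \<delta> * sup_norm n \<pi> \<le> V" if "\<pi> \<in> prob_simplex n" for \<pi>
  proof -
    have p0: "\<And>i. i < n \<Longrightarrow> 0 \<le> \<pi> i" and p1: "(\<Sum>i<n. \<pi> i) = 1"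
      using that by (auto simp: prob_simplex_def)
    define t where "t = sup_norm n \<pi>"
    have pt: "\<pi> i \<le> t" if "i < n" for i
    proof -
      have "\<bar>\<pi> i\<bar> \<le> t" unfolding t_def sup_norm_def using that by (intro Max_ge) auto
      then show ?thesis by simp
    qed
    have t0: "0 \<le> t" using pt p0 assms(1) by (meson le_less_trans order_trans zero_less_one less_le_trans)
    have "inner_n n \<pi> r = (\<Sum>i<n. \<pi> i * V) + (\<Sum>i<n. \<pi> i * (r i - V))"
      unfolding inner_n_def by (simp add: sum.distrib[symmetric] algebra_simps)
    also have "(\<Sum>i<n. \<pi> i * V) = V" using p1 by (simp add: sum_distrib_right[symmetric])
    also have "(\<Sum>i<n. \<pi> i * (r i - V)) \<le> (\<Sum>i<n. t * max 0 (r i - V))"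
    proof (rule sum_mono)
      fix i assume "i \<in> {..<n}"
      then have "0 \<le> \<pi> i" "\<pi> i \<le> t" using p0 pt by auto
      then show "\<pi> i * (r i - V) \<le> t * max 0 (r i - V)"
        by (smt (verit) mult_left_mono mult_right_mono max.cobounded1 max.cobounded2)
    qed
    also have "\<dots> = t * (\<Sum>i<n. max 0 (r i - V))" by (simp add: sum_distrib_left)
    also have "\<dots> \<le> t * \<delta>" using pb t0 by (intro mult_left_mono)
    finally show ?thesis unfolding t_def by (simp add: algebra_simps)
  qed
  have "V = inner_n n (uvec m) r - \<delta> * sup_norm n (uvec m)"
    using inu supu by (simp add: V_def f_def)
  then show ?thesis using m(1) mx usimp main unfolding f_def by auto
qed

end
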